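(* Let $\tau = \frac{1+\sqrt{5}}{2}$. Then $$\tau = -\sum_{k=1}^{\infty} \frac{\varphi(k)}{k} \log\left(1 - \frac{1}{\tau^k}\right), \qquad \frac{1}{\tau} = -\sum_{k=1}^{\infty} \frac{\mu(k)}{k} \log\left(1 - \frac{1}{\tau^k}\right).$$
   Context: $\tau=\frac{1+\sqrt5}{2}$ is the golden ratio. $\varphi(k)$ is Euler's totient function (the number of integers $1\le j\le k$ with $\gcd(j,k)=1$). $\mu(k)$ is the Möbius function: $\mu(1)=1$, $\mu(k)=0$ if $k$ is not squarefree, and $\mu(k)=(-1)^r$ if $k$ is squarefree with $r$ distinct prime factors. $\log$ denotes the natural logarithm. *)

theory Defs
  imports "HOL-Analysis.Analysis" "HOL-Number_Theory.Number_Theory" "HOL-Computational_Algebra.Squarefree"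
begin

definition moebius_mu :: "nat \<Rightarrow> int" where
  "moebius_mu k = (if k = 0 \<or> \<not> squarefree k then 0
                   else (-1) ^ card (prime_factors k))"

definition golden_ratio :: real where
  "golden_ratio = (1 + sqrt 5) / 2"

end

theory Submission
  imports Defs
begin


lemma pow_neg1_sum:
  assumes "finite A" "A \<noteq> {}"
  shows "(\<Sum>X\<in>Pow A. (-1::int) ^ card X) = 0"
proof -
  have "(\<Prod>x\<in>A. (1::int) - 1) = (\<Sum>X\<in>Pow A. (-1) ^ card X * (\<Prod>x\<in>X. 1) * (\<Prod>x\<in>A-X. 1))"
    by (rule prod_diff_conv_sum[OF assms(1)])
  moreover have "(\<Prod>x\<in>A. (1::int) - 1) = 0" using assms by (simp add: card_gt_0_iff)
  ultimately show ?thesis by simp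
qed

lemma sqf_prod:
  fixes d :: nat
  assumes "squarefree d" "d > 0"
  shows "\<Prod>(prime_factors d) = d"
proof -
  have "(\<Prod>p \<in> prime_factors d. p ^ multiplicity p d) = d"
    using prod_prime_factors[of d] assms by simp
  moreover have "(\<Prod>p \<in> prime_factors d. p ^ multiplicity p d) = \<Prod>(prime_factors d)"
    using assms squarefree_factorial_semiring'[of d] by (intro prod.cong) auto
  ultimately show ?thesis by simp
qed

lemma pf_prod:
  assumes "S \<subseteq> prime_factors (n::nat)"
  shows "prime_factors (\<Prod>S) = S"
proof -
  have fin: "finite S" using assms finite_subset by blast
  have pr: "\<And>p. p \<in> S \<Longrightarrow> prime p" using assms by auto
  have "0 \<notin> id ` S" using pr by (metis id_apply imageE not_prime_0)
  then have "prime_factors (prod id S) = \<Union>((prime_factors \<circ> id) ` S)"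
    using prime_factors_prod[OF fin] by blast
  also have "\<dots> = S" using pr prime_prime_factors by auto
  finally show ?thesis by simp
qed

lemma prod_dvd:
  assumes "S \<subseteq> prime_factors (n::nat)" "n > 0"
  shows "\<Prod>S dvd n"
proof -
  have "\<Prod>S dvd \<Prod>(prime_factors n)" by (rule prod_dvd_prod_subset) (use assms in auto)
  also have "\<Prod>(prime_factors n) dvd (\<Prod>p \<in> prime_factors n. p ^ multiplicity p n)"
    by (rule prod_dvd_prod) (auto simp: prime_factors_multiplicity)
  also have "\<dots> = n" using prod_prime_factors[of n] assms by simp
  finally show ?thesis .
qed

lemma sqf_prod2:
  assumes "S \<subseteq> prime_factors (n::nat)" "n > 0"
  shows "squarefree (\<Prod>S)"
proof -
  have fin: "finite S" using assms finite_subset by blast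
  show ?thesis
  proof (intro squarefree_prod_coprime)
    have pr: "\<And>p. p \<in> S \<Longrightarrow> prime p" using assms by auto
    show "\<And>a b. a \<in> S \<Longrightarrow> b \<in> S \<Longrightarrow> a \<noteq> b \<Longrightarrow> coprime a b"
      using pr primes_coprime by metis
    show "\<And>a. a \<in> S \<Longrightarrow> squarefree a" using pr squarefree_prime by auto
  qed
qed

lemma mu_sum:
  assumes "n > 0"
  shows "(\<Sum>d | d dvd n. moebius_mu d) = (if n = 1 then 1 else 0)"
proof -
  have fin: "finite {d. d dvd n}" using assms by simp
  have "(\<Sum>d | d dvd n. moebius_mu d) = (\<Sum>d | d dvd n \<and> squarefree d. (-1) ^ card (prime_factors d))"
  proof -
    have "(\<Sum>d | d dvd n. moebius_mu d) = (\<Sum>d | d dvd n \<and> squarefree d. moebius_mu d)"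
      by (rule sum.mono_neutral_right) (use fin assms in \<open>auto simp: moebius_mu_def\<close>)
    also have "\<dots> = (\<Sum>d | d dvd n \<and> squarefree d. (-1) ^ card (prime_factors d))"
      by (rule sum.cong) (use assms in \<open>auto simp: moebius_mu_def\<close>)
    finally show ?thesis .
  qed
  also have "\<dots> = (\<Sum>S\<in>Pow (prime_factors n). (-1) ^ card S)"
    by (rule sum.reindex_bij_witness[where i = "\<lambda>S. \<Prod>S" and j = prime_factors])
       (use pf_prod prod_dvd sqf_prod2 assms sqf_prod dvd_prime_factors[of n] in \<open>auto intro: Nat.gr0I\<close>)
  also have "\<dots> = (if n = 1 then 1 else 0)"
  proof (cases "n = 1")
    case False
    then have "prime_factors n \<noteq> {}" using assms prime_factorization_empty_iff[of n] by auto
    then show ?thesis using pow_neg1_sum[of "prime_factors n"] False by simp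
  qed simp
  finally show ?thesis .
qed


lemma ln_fiber:
  fixes y :: real
  assumes "0 \<le> y" "y < 1"
  shows "((\<lambda>m. y ^ m / real m) has_sum (- ln (1 - y))) {1..}"
proof -
  have "(\<lambda>n. - ((-(-y))^n) / of_nat n) sums ln (1 + (-y))"
    by (rule ln_series') (use assms in auto)
  then have "(\<lambda>n. - (y^n / real n)) sums ln (1 - y)" by simp
  then have "(\<lambda>n. y^n / real n) sums (- ln (1 - y))"
    using sums_minus by fastforce
  then have "((\<lambda>n. y^n / real n) has_sum (- ln (1 - y))) UNIV"
    by (rule sums_nonneg_imp_has_sum) (use assms in auto)
  then show ?thesis
    by (rule has_sum_cong_neutral[THEN iffD1, rotated -1]) (auto simp: not_less_eq_eq)
qed

lemma main:
  fixes f :: "nat \<Rightarrow> real" and x :: real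
  assumes x: "0 < x" "x < 1" and fb: "\<And>k. k \<ge> 1 \<Longrightarrow> \<bar>f k\<bar> \<le> real k"
    and S: "((\<lambda>n. (\<Sum>d | d dvd n. f d) / real n * x^n) has_sum S) {1..}"
  shows "((\<lambda>k. - (f k / real k) * ln (1 - x^k)) has_sum S) {1..}"
proof -
  define h where "h = (\<lambda>(k::nat,m::nat). f k / real k * (x^(k*m) / real m))"
  define A where "A = Sigma {1::nat..} (\<lambda>_. {1::nat..})"
  have maj: "(\<lambda>(k::nat,m::nat). x^(k*m)) summable_on A"
    unfolding A_def
  proof (rule summable_on_SigmaI[where g = "\<lambda>k. (x^k) / (1 - x^k)"])
    fix k :: nat assume k: "k \<in> {1..}"
    have "norm (x^k) < 1" using x k by (simp add: power_less_one_iff abs_of_pos)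
    from has_sum_geometric_from_1[OF this]
    show "((\<lambda>m. (case (k, m) of (k, m) \<Rightarrow> x ^ (k * m))) has_sum (x^k / (1 - x^k))) {1..}"
      by (simp add: power_mult)
  next
    show "(\<lambda>k. x ^ k / (1 - x ^ k)) summable_on {1..}"
    proof (rule summable_on_comparison_test)
      have "norm x < 1" using x by simp
      from has_sum_geometric_from_1[OF this]
      have "(\<lambda>k. x^k) summable_on {1..}" by (auto simp: summable_on_def)
      then show "(\<lambda>k. x^k / (1 - x)) summable_on {1..}"
        using summable_on_cmult_left[of "\<lambda>k. x^k" "{1..}" "1/(1-x)"] by simp
    next
      fix k :: nat assume k: "k \<in> {1..}"
      have "x^k \<le> x" using x k by (simp add: power_le_one_iff power_decreasing[of 1 k x, simplified])
      moreover have "x^k < 1" using x k by (simp add: power_less_one_iff)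
      ultimately show "x ^ k / (1 - x ^ k) \<le> x ^ k / (1 - x)"
        using x by (intro divide_left_mono) auto
      show "0 \<le> x ^ k / (1 - x ^ k)" using \<open>x^k < 1\<close> x by simp
    qed
  qed (use x in auto)
  have hs: "h summable_on A"
  proof -
    have "(\<lambda>p. norm (h p)) summable_on A"
    proof (rule summable_on_comparison_test[OF maj])
      fix p assume p: "p \<in> A"
      then obtain k m where km: "p = (k,m)" "k \<ge> 1" "m \<ge> 1" unfolding A_def by auto
      have "norm (h p) = \<bar>f k\<bar> / real k * (x^(k*m) / real m)"
        using km x by (simp add: h_def abs_mult)
      also have "\<dots> \<le> 1 * (x^(k*m) / 1)"
      proof (intro mult_mono divide_left_mono)
        show "\<bar>f k\<bar> / real k \<le> 1" using fb[OF km(2)] km by simp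
      qed (use km x in auto)
      finally show "norm (h p) \<le> (case p of (k, m) \<Rightarrow> x ^ (k * m))" using km by simp
    qed auto
    then show ?thesis using summable_on_iff_abs_summable_on_real by blast
  qed
  then obtain T where hT: "(h has_sum T) A" by (auto simp: summable_on_def)
  have part1: "((\<lambda>k. - (f k / real k) * ln (1 - x^k)) has_sum T) {1..}"
  proof (rule has_sum_Sigma'[OF hT[unfolded A_def]])
    fix k :: nat assume k: "k \<in> {1..}"
    have "0 \<le> x^k" "x^k < 1" using x k by (auto simp: power_less_one_iff)
    from has_sum_cmult_right[OF ln_fiber[OF this], of "f k / real k"]
    show "((\<lambda>m. h (k, m)) has_sum (- (f k / real k) * ln (1 - x ^ k))) {1..}"
      by (simp add: h_def power_mult)
  qed
  define B where "B = Sigma {1::nat..} (\<lambda>n. {k. k dvd n})"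
  define h' where "h' = (\<lambda>(n::nat,k::nat). f k * x^n / real n)"
  have h'T: "(h' has_sum T) B"
  proof -
    have "(h has_sum T) A = (h' has_sum T) B"
    proof (rule has_sum_reindex_bij_witness[where j = "\<lambda>(k,m). (k*m, k)" and i = "\<lambda>(n,k). (k, n div k)"])
      fix a assume "a \<in> A" then show "(case case a of (k, m) \<Rightarrow> (k * m, k) of (n, k) \<Rightarrow> (k, n div k)) = a"
        unfolding A_def by auto
    next
      fix a assume "a \<in> A" then show "(case a of (k, m) \<Rightarrow> (k * m, k)) \<in> B"
        unfolding A_def B_def by auto
    next
      fix b assume "b \<in> B" then show "(case case b of (n, k) \<Rightarrow> (k, n div k) of (k, m) \<Rightarrow> (k * m, k)) = b"
        unfolding B_def by auto
    next
      fix b assume "b \<in> B" then show "(case b of (n, k) \<Rightarrow> (k, n div k)) \<in> A"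
        unfolding A_def B_def by (auto simp: dvd_div_eq_0_iff Suc_le_eq intro: Nat.gr0I dest: dvd_imp_le)
    next
      fix a assume "a \<in> A" then show "h' (case a of (k, m) \<Rightarrow> (k * m, k)) = h a"
        unfolding A_def h_def h'_def by (auto simp: field_simps)
    qed simp
    with hT show ?thesis by simp
  qed
  have "((\<lambda>n. \<Sum>k | k dvd n. h' (n,k)) has_sum T) {1..}"
  proof (rule has_sum_Sigma'[OF h'T[unfolded B_def]])
    fix n :: nat assume n: "n \<in> {1..}"
    show "((\<lambda>k. h' (n, k)) has_sum (\<Sum>k | k dvd n. h' (n, k))) {k. k dvd n}"
      by (rule has_sum_finiteI) (use n in auto)
  qed
  moreover have "\<And>n. n \<in> {1..} \<Longrightarrow> (\<Sum>k | k dvd n. h' (n,k)) = (\<Sum>d | d dvd n. f d) / real n * x^n"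
    by (simp add: h'_def sum_divide_distrib sum_distrib_right)
  ultimately have "((\<lambda>n. (\<Sum>d | d dvd n. f d) / real n * x^n) has_sum T) {1..}"
    using has_sum_cong by (metis (no_types, lifting))
  with S have "T = S" using has_sum_unique by blast
  with part1 show ?thesis by simp
qed



lemma tosums:
  assumes "(F has_sum S) {1::nat..}"
  shows "(\<lambda>n. F (Suc n)) sums S"
proof -
  have "bij_betw Suc UNIV {1::nat..}"
    by (rule bij_betwI[where g = "\<lambda>n. n - 1"]) auto
  from has_sum_reindex_bij_betw[OF this, of F] assms
  have "((\<lambda>n. F (Suc n)) has_sum S) UNIV" by simp
  then show ?thesis by (rule has_sum_imp_sums)
qed

theorem lemma2:
  shows "((\<lambda>n. - (real (totient (Suc n)) / real (Suc n))
                 * ln (1 - 1 / golden_ratio ^ Suc n)) sums golden_ratio) \<and>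
         ((\<lambda>n. - (real_of_int (moebius_mu (Suc n)) / real (Suc n))
                 * ln (1 - 1 / golden_ratio ^ Suc n)) sums (1 / golden_ratio))"
proof -
  define x where "x = 1 / golden_ratio"
  have s5: "sqrt 5 > 1" by (simp add: real_less_rsqrt)
  have gt: "golden_ratio > 1" using s5 by (simp add: golden_ratio_def)
  have s55: "sqrt 5 * sqrt 5 = 5" by simp
  have sq: "golden_ratio * golden_ratio = golden_ratio + 1"
    unfolding golden_ratio_def using s55 by (simp add: algebra_simps add_divide_distrib)
  have x0: "0 < x" "x < 1" using gt by (auto simp: x_def)
  have xk: "\<And>k. 1 / golden_ratio ^ k = x ^ k" by (simp add: x_def power_one_over)
  have xg1: "x / (1 - x) = 1 / (golden_ratio - 1)"
    using gt by (simp add: x_def field_simps)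
  have gg: "golden_ratio * (golden_ratio - 1) = 1" using sq by (simp add: algebra_simps)
  have "1 / (golden_ratio - 1) = golden_ratio"
    using gt gg by (simp add: divide_eq_eq mult.commute)
  then have xg: "x / (1 - x) = golden_ratio"
    using xg1 by simp
  have A: "((\<lambda>k. - (real (totient k) / real k) * ln (1 - x^k)) has_sum golden_ratio) {1..}"
  proof (rule main[OF x0])
    show "\<And>k. 1 \<le> k \<Longrightarrow> \<bar>real (totient k)\<bar> \<le> real k" by (simp add: totient_le)
    have "norm x < 1" using x0 by simp
    from has_sum_geometric_from_1[OF this]
    have "((\<lambda>n. x^n) has_sum golden_ratio) {1..}" using xg by simp
    moreover have "\<And>n. n \<in> {1..} \<Longrightarrow> (\<Sum>d | d dvd n. real (totient d)) / real n * x ^ n = x^n"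
    proof -
      fix n :: nat assume n: "n \<in> {1..}"
      have "(\<Sum>d | d dvd n. real (totient d)) = real (\<Sum>d | d dvd n. totient d)" by simp
      also have "\<dots> = real n" by (simp add: totient_divisor_sum)
      finally show "(\<Sum>d | d dvd n. real (totient d)) / real n * x ^ n = x^n" using n by simp
    qed
    ultimately show "((\<lambda>n. (\<Sum>d | d dvd n. real (totient d)) / real n * x ^ n) has_sum golden_ratio) {1..}"
      using has_sum_cong by (metis (no_types, lifting))
  qed
  have B: "((\<lambda>k. - (real_of_int (moebius_mu k) / real k) * ln (1 - x^k)) has_sum x) {1..}"
  proof (rule main[OF x0])
    show "\<And>k. 1 \<le> k \<Longrightarrow> \<bar>real_of_int (moebius_mu k)\<bar> \<le> real k" by (simp add: moebius_mu_def)
    have e: "\<And>n. n \<in> {1..} \<Longrightarrow> (\<Sum>d | d dvd n. real_of_int (moebius_mu d)) / real n * x ^ n = (if n = 1 then x else 0)"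
    proof -
      fix n :: nat assume n: "n \<in> {1..}"
      have "(\<Sum>d | d dvd n. real_of_int (moebius_mu d)) = real_of_int (\<Sum>d | d dvd n. moebius_mu d)" by simp
      also have "\<dots> = (if n = 1 then 1 else 0)" using mu_sum[of n] n by simp
      finally show "(\<Sum>d | d dvd n. real_of_int (moebius_mu d)) / real n * x ^ n = (if n = 1 then x else 0)" by simp
    qed
    have "((\<lambda>n::nat. if n = 1 then x else 0) has_sum x) {1..}"
      by (rule has_sum_finite_neutralI[where B = "{1}"]) auto
    moreover have "((\<lambda>n. (\<Sum>d | d dvd n. real_of_int (moebius_mu d)) / real n * x ^ n) has_sum x) {1..}
       = ((\<lambda>n::nat. if n = 1 then x else 0) has_sum x) {1..}"
      by (rule has_sum_cong) (rule e)
    ultimately show "((\<lambda>n. (\<Sum>d | d dvd n. real_of_int (moebius_mu d)) / real n * x ^ n) has_sum x) {1..}"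
      by simp
  qed
  have xk': "\<And>k. x ^ k = 1 / golden_ratio ^ k" using xk by simp
  show ?thesis
    using tosums[OF A] tosums[OF B] unfolding xk' x_def power_one_over by blast
qed
end
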